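(* Under either the overlap preference model or the cost preference model, any pair $\langle R,F\rangle$ consisting of a non-wasteful shortlisting rule $R$ and an exhaustive allocation rule $F$ is neither R-FSSP-P nor R-FSSP-A (and hence also not R-FSSP-O).
   Context: Let $\mathbb{P}=\{p_1,\dots,p_m\}$ be a finite set of projects, $c:\mathbb{P}\to\mathbb{N}$ a cost function with $c(P)=\sum_{p\in P}c(p)$, $B\in\mathbb{N}$ a budget with $c(p)\le B$ for all $p$; agents $\mathcal{N}=\{1,\dots,n\}$. Tie-breaking: for a nonempty family $\mathfrak{P}$ of subsets of $\mathbb{P}$, $T(\mathfrak{P})$ is the unique $P\in\mathfrak{P}$ such that for all $P'\in\mathfrak{P}\setminus\{P\}$ the lowest-index project of $(P\setminus P')\cup(P'\setminus P)$ lies in $P$. Greedy selection $\mathit{GREED}(P,\gg)$, for $P\subseteq\mathbb{P}$ and a strict linear order $\gg$ on $P$, examines projects in the order $\gg$ and selects a project iff doing so keeps the total cost of selected projects at most $B$. Shortlisting stage: a shortlisting instance is $\langle\mathbb{P},c,B\rangle$; a shortlisting profile is $\boldsymbol{P}=(P_1,\dots,P_n)$, $P_i\subseteq\mathbb{P}$, $\bigcup\boldsymbol{P}=P_1\cup\dots\cup P_n$; $(\boldsymbol{P}_{-i},P_i')$ replaces $P_i$ by $P_i'$; a shortlisting rule $R$ outputs $R(I,\boldsymbol{P})\subseteq\bigcup\boldsymbol{P}$. $R$ is non-wasteful if for every $I,\boldsymbol{P}$, either $c(R(I,\boldsymbol{P}))\ge B$ or $R(I,\boldsymbol{P})=\bigcup\boldsymbol{P}$.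 Each agent $i$ has an awareness set $C_i\subseteq\mathbb{P}$; $\boldsymbol{C}=(C_1,\dots,C_n)$. Allocation stage: an allocation instance is $\langle\mathcal{P},c,B\rangle$, $\mathcal{P}\subseteq\mathbb{P}$; a profile $\boldsymbol{A}=(A_1,\dots,A_n)$, $A_i\subseteq\mathcal{P}$; $A\subseteq\mathcal{P}$ is feasible if $c(A)\le B$ and exhaustive if it is feasible and there is no $p\in\mathcal{P}\setminus A$ with $c(A\cup\{p\})\le B$; an allocation rule $F$ outputs a feasible $F(I,\boldsymbol{A})$, and is exhaustive if its output is always exhaustive. Preferences: each agent $i$ has a strict linear order $\rhd_i$ on $\mathbb{P}$; $\mathit{top}_i(\mathcal{P})=\mathit{GREED}(\mathcal{P},\rhd_i|_{\mathcal{P}})$, $\boldsymbol{top}(\mathcal{P})=(\mathit{top}_1(\mathcal{P}),\dots,\mathit{top}_n(\mathcal{P}))$. For $P\subseteq\mathbb{P}$: overlap model $A\succeq_P A'$ iff $|A\cap P|\ge|A'\cap P|$; cost model $A\succeq_P A'$ iff $c(A\cap P)\ge c(A'\cap P)$; $\succ_P$ its strict part. $\mathit{best}(\succ,\mathfrak{P})$ is the set of elements of $\mathfrak{P}$ undominated w.r.t. $\succ$. Best response: for $I=\langle\mathcal{P},c,B\rangle$, profile $\boldsymbol{A}$, agent $i$: $A_i^\star(I,\boldsymbol{A})=T(\mathit{best}(\succ_{\mathit{top}_i(\mathcal{P})},\{F(I,(\boldsymbol{A}_{-i},A_i'))\mid A_i'\subseteq\mathcal{P}\}))$ and $F^\star(I,\boldsymbol{A})=F(I,(\boldsymbol{A}_{-i},A_i^\star(I,\boldsymbol{A})))$.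 Manipulation: given $R,F$, shortlisting instance $I_1$, profile $\boldsymbol{P}$, agent $i$, $P_i'\subseteq\mathbb{P}$, let $\mathcal{P}=R(I_1,\boldsymbol{P})$, $\mathcal{P}'=R(I_1,(\boldsymbol{P}_{-i},P_i'))$, $I_2=\langle\mathcal{P},c,B\rangle$, $I_2'=\langle\mathcal{P}',c,B\rangle$, $Q=\mathit{top}_i(\mathcal{P}\cup\mathcal{P}')$. $P_i'$ is a successful pessimistic manipulation if for all profiles $\boldsymbol{A}$ on $\mathcal{P}$ and $\boldsymbol{A}'$ on $\mathcal{P}'$, $F^\star(I_2',\boldsymbol{A}')\succeq_Q F^\star(I_2,\boldsymbol{A})$, strictly for at least one pair; successful optimistic if for some $\boldsymbol{A}$ on $\mathcal{P}$ and some $\boldsymbol{A}'$ on $\mathcal{P}'$, $F^\star(I_2',\boldsymbol{A}')\succ_Q F^\star(I_2,\boldsymbol{A})$; successful anticipative if $F^\star(I_2',\boldsymbol{top}(\mathcal{P}'))\succ_Q F^\star(I_2,\boldsymbol{top}(\mathcal{P}))$. R-FSSP: for a preference model, $\langle R,F\rangle$ is R-FSSP w.r.t. a manipulation type if for every shortlisting instance, awareness profile $\boldsymbol{C}$, shortlisting profile $\boldsymbol{P}$ with $P_{i'}\subseteq C_{i'}$ for all $i'$, and agent $i$, there is no $P_i'\subseteq C_i$ such that submitting $P_i'$ instead of $\mathit{top}_i(C_i)$ (i.e., going from $(\boldsymbol{P}_{-i},\mathit{top}_i(C_i))$ to $(\boldsymbol{P}_{-i},P_i')$) is a successful manipulation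 of that type. R-FSSP-P, R-FSSP-O, R-FSSP-A refer to pessimistic, optimistic, anticipative manipulation. *)

theory Defs
  imports Main
begin

text \<open>Projects are natural numbers; the index order of projects is the usual order on nat. Agents are list positions 0..n-1;
  a profile is a list of sets (one per agent). Preferences are strict linear orders on PP,
  given as relations (x,y) in r meaning x is preferred to y.\<close>

type_synonym rule = "nat set \<Rightarrow> (nat \<Rightarrow> nat) \<Rightarrow> nat \<Rightarrow> nat set list \<Rightarrow> nat set"

definition tie_break :: "nat set set \<Rightarrow> nat set" where
  "tie_break Fam = (THE P. P \<in> Fam \<and> (\<forall>P'\<in>Fam - {P}. Min ((P - P') \<union> (P' - P)) \<in> P))"

definition order_list :: "nat rel \<Rightarrow> nat set \<Rightarrow> nat list" where
  "order_list r P = (THE xs. set xs = P \<and> distinct xs \<and> sorted_wrt (\<lambda>x y. (x, y) \<in> r) xs)"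

definition greed :: "(nat \<Rightarrow> nat) \<Rightarrow> nat \<Rightarrow> nat set \<Rightarrow> nat rel \<Rightarrow> nat set" where
  "greed c B P r = foldl (\<lambda>S x. if sum c S + c x \<le> B then insert x S else S) {} (order_list r P)"

definition top :: "(nat \<Rightarrow> nat) \<Rightarrow> nat \<Rightarrow> nat rel \<Rightarrow> nat set \<Rightarrow> nat set" where
  "top c B r P = greed c B P r"

datatype pref_model = Overlap | CostModel

definition weak_pref :: "pref_model \<Rightarrow> (nat \<Rightarrow> nat) \<Rightarrow> nat set \<Rightarrow> nat set \<Rightarrow> nat set \<Rightarrow> bool" where
  "weak_pref M c Q A A' = (case M of
      Overlap \<Rightarrow> card (A \<inter> Q) \<ge> card (A' \<inter> Q)
    | CostModel \<Rightarrow> sum c (A \<inter> Q) \<ge> sum c (A' \<inter> Q))"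

definition strict_pref :: "pref_model \<Rightarrow> (nat \<Rightarrow> nat) \<Rightarrow> nat set \<Rightarrow> nat set \<Rightarrow> nat set \<Rightarrow> bool" where
  "strict_pref M c Q A A' = (weak_pref M c Q A A' \<and> \<not> weak_pref M c Q A' A)"

definition best :: "pref_model \<Rightarrow> (nat \<Rightarrow> nat) \<Rightarrow> nat set \<Rightarrow> nat set set \<Rightarrow> nat set set" where
  "best M c Q Fam = {A \<in> Fam. \<not> (\<exists>A'\<in>Fam. strict_pref M c Q A' A)}"

definition valid_instance :: "nat set \<Rightarrow> (nat \<Rightarrow> nat) \<Rightarrow> nat \<Rightarrow> bool" where
  "valid_instance PP c B = (finite PP \<and> (\<forall>p\<in>PP. c p \<le> B))"

definition profile_on :: "nat set \<Rightarrow> nat set list \<Rightarrow> bool" where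
  "profile_on X Ps = (\<forall>A\<in>set Ps. A \<subseteq> X)"

definition is_shortlisting_rule :: "rule \<Rightarrow> bool" where
  "is_shortlisting_rule R = (\<forall>PP c B Ps. valid_instance PP c B \<and> profile_on PP Ps
      \<longrightarrow> R PP c B Ps \<subseteq> \<Union> (set Ps))"

definition non_wasteful :: "rule \<Rightarrow> bool" where
  "non_wasteful R = (\<forall>PP c B Ps. valid_instance PP c B \<and> profile_on PP Ps
      \<longrightarrow> sum c (R PP c B Ps) \<ge> B \<or> R PP c B Ps = \<Union> (set Ps))"

definition feasible :: "nat set \<Rightarrow> (nat \<Rightarrow> nat) \<Rightarrow> nat \<Rightarrow> nat set \<Rightarrow> bool" where
  "feasible P c B A = (A \<subseteq> P \<and> sum c A \<le> B)"

definition exhaustive :: "nat set \<Rightarrow> (nat \<Rightarrow> nat) \<Rightarrow> nat \<Rightarrow> nat set \<Rightarrow> bool" where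
  "exhaustive P c B A = (feasible P c B A \<and> \<not> (\<exists>p\<in>P - A. sum c (insert p A) \<le> B))"

definition is_allocation_rule :: "rule \<Rightarrow> bool" where
  "is_allocation_rule F = (\<forall>P c B As. valid_instance P c B \<and> profile_on P As
      \<longrightarrow> feasible P c B (F P c B As))"

definition exhaustive_rule :: "rule \<Rightarrow> bool" where
  "exhaustive_rule F = (\<forall>P c B As. valid_instance P c B \<and> profile_on P As
      \<longrightarrow> exhaustive P c B (F P c B As))"

definition best_resp :: "pref_model \<Rightarrow> rule \<Rightarrow> nat rel list \<Rightarrow> nat \<Rightarrow> nat set \<Rightarrow> (nat \<Rightarrow> nat) \<Rightarrow> nat
    \<Rightarrow> nat set list \<Rightarrow> nat set" where
  "best_resp M F prefs i P c B As =
     tie_break (best M c (top c B (prefs ! i) P) {F P c B (As[i := A']) | A'. A' \<subseteq> P})"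

definition F_star :: "pref_model \<Rightarrow> rule \<Rightarrow> nat rel list \<Rightarrow> nat \<Rightarrow> nat set \<Rightarrow> (nat \<Rightarrow> nat) \<Rightarrow> nat
    \<Rightarrow> nat set list \<Rightarrow> nat set" where
  "F_star M F prefs i P c B As = F P c B (As[i := best_resp M F prefs i P c B As])"

datatype manip_kind = Pessimistic | Optimistic | Anticipative

definition successful_manip :: "manip_kind \<Rightarrow> pref_model \<Rightarrow> rule \<Rightarrow> rule \<Rightarrow> nat rel list
    \<Rightarrow> nat set \<Rightarrow> (nat \<Rightarrow> nat) \<Rightarrow> nat \<Rightarrow> nat set list \<Rightarrow> nat \<Rightarrow> nat set \<Rightarrow> bool" where
  "successful_manip k M R F prefs PP c B Ps i P' =
    (let SP = R PP c B Ps; SP' = R PP c B (Ps[i := P']);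
         Q = top c B (prefs ! i) (SP \<union> SP');
         profs = (\<lambda>X. {As. length As = length Ps \<and> profile_on X As});
         Fs = F_star M F prefs i
     in case k of
       Pessimistic \<Rightarrow>
         (\<forall>A\<in>profs SP. \<forall>A'\<in>profs SP'. weak_pref M c Q (Fs SP' c B A') (Fs SP c B A)) \<and>
         (\<exists>A\<in>profs SP. \<exists>A'\<in>profs SP'. strict_pref M c Q (Fs SP' c B A') (Fs SP c B A))
     | Optimistic \<Rightarrow>
         (\<exists>A\<in>profs SP. \<exists>A'\<in>profs SP'. strict_pref M c Q (Fs SP' c B A') (Fs SP c B A))
     | Anticipative \<Rightarrow>
         strict_pref M c Q (Fs SP' c B (map (\<lambda>r. top c B r SP') prefs))
                           (Fs SP c B (map (\<lambda>r. top c B r SP) prefs)))"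

definition R_FSSP :: "manip_kind \<Rightarrow> pref_model \<Rightarrow> rule \<Rightarrow> rule \<Rightarrow> bool" where
  "R_FSSP k M R F = (\<forall>PP c B Cs Ps prefs i P'.
      valid_instance PP c B \<and> length Cs = length Ps \<and> length prefs = length Ps \<and>
      (\<forall>j<length Ps. Ps ! j \<subseteq> Cs ! j \<and> Cs ! j \<subseteq> PP \<and> strict_linear_order_on PP (prefs ! j)) \<and>
      i < length Ps \<and> P' \<subseteq> Cs ! i
      \<longrightarrow> \<not> successful_manip k M R F prefs PP c B
              (Ps[i := top c B (prefs ! i) (Cs ! i)]) i P')"

end

theory Submission
  imports Defs
begin

definition symd :: "nat set \<Rightarrow> nat set \<Rightarrow> nat set" where
  "symd A B = (A - B) \<union> (B - A)"

lemma symd_min_props: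
  assumes "finite A" "finite B" "A \<noteq> B"
  shows "Min (symd A B) \<in> symd A B \<and> (\<forall>z < Min (symd A B). z \<in> A \<longleftrightarrow> z \<in> B)"
proof -
  have f: "finite (symd A B)" using assms by (simp add: symd_def)
  have ne: "symd A B \<noteq> {}" using assms by (auto simp: symd_def)
  have "Min (symd A B) \<in> symd A B" using f ne by simp
  moreover have "\<forall>z < Min (symd A B). z \<in> A \<longleftrightarrow> z \<in> B"
  proof (intro allI impI)
    fix z assume z: "z < Min (symd A B)"
    show "z \<in> A \<longleftrightarrow> z \<in> B"
    proof (rule ccontr)
      assume "\<not> (z \<in> A \<longleftrightarrow> z \<in> B)"
      then have "z \<in> symd A B" by (auto simp: symd_def)
      then have "Min (symd A B) \<le> z" using f by simp
      then show False using z by simp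
    qed
  qed
  ultimately show ?thesis by blast
qed

lemma symd_min_char:
  assumes "finite A" "finite B" "m \<in> symd A B" "\<forall>z < m. z \<in> A \<longleftrightarrow> z \<in> B"
  shows "Min (symd A B) = m"
proof -
  have f: "finite (symd A B)" using assms by (simp add: symd_def)
  show ?thesis
  proof (rule Min_eqI[OF f])
    fix y assume "y \<in> symd A B"
    then show "m \<le> y" using assms(4) by (auto simp: symd_def not_less[symmetric])
  qed (use assms in auto)
qed

definition winner :: "nat set set \<Rightarrow> nat set \<Rightarrow> bool" where
  "winner Fam P = (P \<in> Fam \<and> (\<forall>P'\<in>Fam - {P}. Min ((P - P') \<union> (P' - P)) \<in> P))"

lemma winner_unique:
  assumes "winner Fam P1" "winner Fam P2" "\<forall>P\<in>Fam. finite P"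
  shows "P1 = P2"
proof (rule ccontr)
  assume ne: "P1 \<noteq> P2"
  have "Min (symd P1 P2) \<in> P1" using assms ne unfolding winner_def symd_def by auto
  moreover have "Min (symd P2 P1) \<in> P2" using assms ne unfolding winner_def symd_def by auto
  moreover have "symd P2 P1 = symd P1 P2" by (auto simp: symd_def)
  moreover have "Min (symd P1 P2) \<in> symd P1 P2" using symd_min_props[of P1 P2] assms ne
    unfolding winner_def by auto
  ultimately show False by (auto simp: symd_def)
qed

lemma winner_exists:
  assumes "finite Fam" "Fam \<noteq> {}" "\<forall>P\<in>Fam. finite P"
  shows "\<exists>P. winner Fam P"
  using assms
proof (induction Fam rule: finite_ne_induct)
  case (singleton X)
  then show ?case by (auto simp: winner_def)
next
  case (insert X Fam)
  from insert obtain P where P: "winner Fam P" by auto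
  have fX: "finite X" using insert by auto
  have fP: "finite P" using P insert unfolding winner_def by auto
  have XP: "X \<noteq> P" using P insert unfolding winner_def by auto
  define m where "m = Min (symd X P)"
  have mprops: "m \<in> symd X P" "\<forall>z < m. z \<in> X \<longleftrightarrow> z \<in> P"
    using symd_min_props[OF fX fP XP] unfolding m_def by auto
  show ?case
  proof (cases "m \<in> X")
    case True
    have "winner (insert X Fam) X"
      unfolding winner_def
    proof (intro conjI ballI)
      show "X \<in> insert X Fam" by simp
      fix P' assume P': "P' \<in> insert X Fam - {X}"
      then have P'F: "P' \<in> Fam" by auto
      have fP': "finite P'" using P'F insert by auto
      show "Min ((X - P') \<union> (P' - X)) \<in> X"
      proof (cases "P' = P")
        case True
        then show ?thesis using \<open>m \<in> X\<close> unfolding m_def symd_def by simp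
      next
        case False
        define m' where "m' = Min (symd P P')"
        have m'props: "m' \<in> symd P P'" "\<forall>z < m'. z \<in> P \<longleftrightarrow> z \<in> P'"
          using symd_min_props[OF fP fP' False[symmetric]] unfolding m'_def by auto
        have "m' \<in> P" using P P'F False unfolding winner_def m'_def symd_def by auto
        have mnX: "m \<notin> P" using mprops \<open>m \<in> X\<close> by (auto simp: symd_def)
        consider "m < m'" | "m' < m" | "m = m'" by linarith
        then show ?thesis
        proof cases
          case 1
          have "Min (symd X P') = m"
            by (rule symd_min_char[OF fX fP']) (use 1 mprops m'props \<open>m \<in> X\<close> mnX in \<open>auto simp: symd_def\<close>)
          then show ?thesis using \<open>m \<in> X\<close> by (simp add: symd_def)
        next
          case 2
          have "m' \<in> X" using 2 mprops \<open>m' \<in> P\<close> by auto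
          have "Min (symd X P') = m'"
            by (rule symd_min_char[OF fX fP']) (use 2 mprops m'props \<open>m' \<in> X\<close> \<open>m' \<in> P\<close> in \<open>auto simp: symd_def\<close>)
          then show ?thesis using \<open>m' \<in> X\<close> by (simp add: symd_def)
        next
          case 3
          then show ?thesis using mnX \<open>m' \<in> P\<close> by simp
        qed
      qed
    qed
    then show ?thesis by blast
  next
    case False
    have "m \<in> P" using False mprops by (auto simp: symd_def)
    have "winner (insert X Fam) P"
      unfolding winner_def
    proof (intro conjI ballI)
      show "P \<in> insert X Fam" using P unfolding winner_def by auto
      fix P' assume P': "P' \<in> insert X Fam - {P}"
      show "Min ((P - P') \<union> (P' - P)) \<in> P"
      proof (cases "P' = X")
        case True
        have "symd X P = (P - X) \<union> (X - P)" by (auto simp: symd_def)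
        then show ?thesis using True \<open>m \<in> P\<close> unfolding m_def by simp
      next
        case False
        then show ?thesis using P P' unfolding winner_def by auto
      qed
    qed
    then show ?thesis by blast
  qed
qed

lemma tie_break_in:
  assumes "finite Fam" "Fam \<noteq> {}" "\<forall>P\<in>Fam. finite P"
  shows "tie_break Fam \<in> Fam"
proof -
  obtain P where P: "winner Fam P" using winner_exists[OF assms] by blast
  have "tie_break Fam = P"
    unfolding tie_break_def
    by (rule the_equality) (use P winner_unique[OF _ _ assms(3)] in \<open>auto simp: winner_def\<close>)
  then show ?thesis using P by (simp add: winner_def)
qed

definition val :: "pref_model \<Rightarrow> (nat \<Rightarrow> nat) \<Rightarrow> nat set \<Rightarrow> nat set \<Rightarrow> nat" where
  "val M c Q A = (case M of Overlap \<Rightarrow> card (A \<inter> Q) | CostModel \<Rightarrow> sum c (A \<inter> Q))"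

lemma weak_pref_val: "weak_pref M c Q A A' \<longleftrightarrow> val M c Q A' \<le> val M c Q A"
  by (cases M) (auto simp: weak_pref_def val_def)

lemma strict_pref_val: "strict_pref M c Q A A' \<longleftrightarrow> val M c Q A' < val M c Q A"
  by (auto simp: strict_pref_def weak_pref_val)

lemma best_ne:
  assumes "finite Fam" "Fam \<noteq> {}"
  shows "best M c Q Fam \<noteq> {}"
proof -
  let ?f = "val M c Q"
  have "Max (?f ` Fam) \<in> ?f ` Fam" using assms by simp
  then obtain A where A: "A \<in> Fam" "?f A = Max (?f ` Fam)" by auto
  have "\<forall>A'\<in>Fam. ?f A' \<le> ?f A" using A assms by simp
  then have "A \<in> best M c Q Fam" using A by (auto simp: best_def strict_pref_val not_less)
  then show ?thesis by auto
qed

lemma Fstar_form: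
  assumes "valid_instance P c B" "is_allocation_rule F" "profile_on P As" "finite P"
  shows "\<exists>X\<subseteq>P. F_star M F prefs i P c B As = F P c B (As[i := X])"
proof -
  define Fam0 where "Fam0 = {F P c B (As[i := A']) | A'. A' \<subseteq> P}"
  have sub: "\<forall>X\<in>Fam0. X \<subseteq> P"
  proof
    fix X assume "X \<in> Fam0"
    then obtain A' where A': "A' \<subseteq> P" "X = F P c B (As[i := A'])" unfolding Fam0_def by auto
    have "profile_on P (As[i := A'])" using assms(3) A'(1)
      unfolding profile_on_def by (auto dest!: set_update_subset_insert[THEN subsetD])
    then show "X \<subseteq> P" using assms(1,2) A' unfolding is_allocation_rule_def feasible_def by blast
  qed
  have fin: "finite Fam0" using sub assms(4)
    by (meson Pow_iff finite_Pow_iff rev_finite_subset subsetI)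
  have ne: "Fam0 \<noteq> {}" unfolding Fam0_def by blast
  let ?Q = "top c B (prefs ! i) P"
  have bsub: "best M c ?Q Fam0 \<subseteq> Fam0" by (auto simp: best_def)
  have "tie_break (best M c ?Q Fam0) \<in> best M c ?Q Fam0"
  proof (rule tie_break_in)
    show "finite (best M c ?Q Fam0)" using bsub fin by (rule finite_subset)
    show "best M c ?Q Fam0 \<noteq> {}" using best_ne[OF fin ne] .
    show "\<forall>P'\<in>best M c ?Q Fam0. finite P'" using bsub sub assms(4) by (meson finite_subset subsetD)
  qed
  then have T: "tie_break (best M c ?Q Fam0) \<in> Fam0" using bsub by auto
  have "best_resp M F prefs i P c B As = tie_break (best M c ?Q Fam0)"
    unfolding best_resp_def Fam0_def by simp
  then show ?thesis using T sub unfolding F_star_def by auto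
qed


lemma lt_slo: "strict_linear_order_on A {(x,y). (x::nat) < y}"
  by (auto simp: strict_linear_order_on_def trans_def irrefl_def total_on_def)

lemma order_list_sorted:
  assumes "sorted xs" "distinct xs"
  shows "order_list {(x,y). (x::nat) < y} (set xs) = xs"
  unfolding order_list_def
proof (rule the_equality)
  show "set xs = set xs \<and> distinct xs \<and> sorted_wrt (\<lambda>x y. (x, y) \<in> {(x,y). (x::nat) < y}) xs"
    using assms by (simp add: strict_sorted_iff)
next
  fix ys assume "set ys = set xs \<and> distinct ys \<and> sorted_wrt (\<lambda>x y. (x, y) \<in> {(x,y). (x::nat) < y}) ys"
  then show "ys = xs" using assms
    by (metis (no_types, lifting) case_prod_conv mem_Collect_eq sorted_distinct_set_unique
        sorted_wrt_mono_rel strict_sorted_iff)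
qed

lemma foldl_sub:
  "foldl (\<lambda>S x. if sum c S + c x \<le> B then insert x S else S) S0 xs \<subseteq> S0 \<union> set xs"
proof (induction xs arbitrary: S0)
  case Nil
  then show ?case by simp
next
  case (Cons a xs)
  let ?g = "\<lambda>S x. if sum c S + c x \<le> B then insert x S else S"
  have "foldl ?g (?g S0 a) xs \<subseteq> ?g S0 a \<union> set xs" by (rule Cons.IH)
  moreover have "?g S0 a \<subseteq> insert a S0" by auto
  ultimately show ?case by auto
qed

lemma top_sub:
  assumes "finite S"
  shows "top c B {(x,y). (x::nat) < y} S \<subseteq> S"
proof -
  have "order_list {(x,y). (x::nat) < y} S = sorted_list_of_set S"
    using order_list_sorted[of "sorted_list_of_set S"] assms by simp
  then show ?thesis using foldl_sub[of c B "{}" "sorted_list_of_set S"] assms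
    unfolding top_def greed_def by simp
qed

lemma top_eval:
  assumes "sorted xs" "distinct xs"
  shows "top c B {(x,y). (x::nat) < y} (set xs) =
    foldl (\<lambda>S x. if sum c S + c x \<le> B then insert x S else S) {} xs"
  unfolding top_def greed_def using order_list_sorted[OF assms] by simp

theorem theorem1:
  fixes M :: pref_model and R F :: rule
  assumes "is_shortlisting_rule R" and "non_wasteful R"
    and "is_allocation_rule F" and "exhaustive_rule F"
  shows "\<not> R_FSSP Pessimistic M R F \<and> \<not> R_FSSP Anticipative M R F \<and> \<not> R_FSSP Optimistic M R F"
proof -
  define r where "r = {(x,y). (x::nat) < y}"
  define c where "c = (\<lambda>x::nat. if x = 1 then 2 else (1::nat))"
  define PP where "PP = {0,1,2::nat}"
  have vPP: "valid_instance PP c 2" by (simp add: valid_instance_def PP_def c_def)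
  have t12: "top c 2 r {1,2} = {1}"
  proof -
    have "top c 2 r (set [1,2]) = {1}" unfolding r_def by (subst top_eval) (auto simp: c_def)
    then show ?thesis by simp
  qed
  have t02: "top c 2 r {0,2} = {0,2}"
  proof -
    have "top c 2 r (set [0,2]) = {0,2}" unfolding r_def by (subst top_eval) (auto simp: c_def)
    then show ?thesis by simp
  qed
  have t012: "top c 2 r {0,1,2} = {0,2}"
  proof -
    have "top c 2 r (set [0,1,2]) = {0,2}" unfolding r_def by (subst top_eval) (auto simp: c_def)
    then show ?thesis by simp
  qed
  define SP where "SP = R PP c 2 [{1},{0}]"
  define SP' where "SP' = R PP c 2 [{2},{0}]"
  have SPsub: "SP \<subseteq> {0,1}"
    using assms(1) vPP unfolding SP_def is_shortlisting_rule_def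
    by (force simp: profile_on_def PP_def)
  have SP'sub: "SP' \<subseteq> {0,2}"
    using assms(1) vPP unfolding SP'_def is_shortlisting_rule_def
    by (force simp: profile_on_def PP_def)
  have SP'nw: "2 \<le> sum c SP' \<or> SP' = {0,2}"
    using assms(2) vPP unfolding SP'_def non_wasteful_def
    by (force simp: profile_on_def PP_def)
  have SP'eq: "SP' = {0,2}"
  proof -
    have "SP' = {} \<or> SP' = {0} \<or> SP' = {2} \<or> SP' = {0,2}" using SP'sub by blast
    then show ?thesis using SP'nw by (auto simp: c_def)
  qed
  have Qeq: "top c 2 r (SP \<union> SP') = {0,2}"
  proof (cases "1 \<in> SP")
    case True
    then have "SP \<union> SP' = {0,1,2}" using SPsub SP'eq by auto
    then show ?thesis using t012 by simp
  next
    case False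
    then have "SP \<union> SP' = {0,2}" using SPsub SP'eq by auto
    then show ?thesis using t02 by simp
  qed
  have finSP: "finite SP" using SPsub by (rule finite_subset) simp
  have vSP: "valid_instance SP c 2" using finSP by (simp add: valid_instance_def c_def)
  have vSP': "valid_instance {0,2} c (2::nat)" by (simp add: valid_instance_def c_def)
  have truth: "val M c {0,2} (F_star M F [r,r] 0 SP c 2 As) \<le> 1" if hA: "profile_on SP As" for As
  proof -
    obtain X where X: "X \<subseteq> SP" "F_star M F [r,r] 0 SP c 2 As = F SP c 2 (As[0 := X])"
      using Fstar_form[OF vSP assms(3) hA finSP, where M=M and prefs="[r,r]" and i=0] by blast
    have "profile_on SP (As[0 := X])" using hA X(1)
      unfolding profile_on_def by (auto dest!: set_update_subset_insert[THEN subsetD])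
    then have "F SP c 2 (As[0 := X]) \<subseteq> SP"
      using assms(3) vSP unfolding is_allocation_rule_def feasible_def by blast
    then have sub0: "F_star M F [r,r] 0 SP c 2 As \<inter> {0,2} \<subseteq> {0}" using X(2) SPsub by auto
    show ?thesis
    proof (cases M)
      case Overlap
      have "card (F_star M F [r,r] 0 SP c 2 As \<inter> {0,2}) \<le> card {0::nat}"
        by (rule card_mono[OF _ sub0]) simp
      then show ?thesis using Overlap by (simp add: val_def)
    next
      case CostModel
      have "sum c (F_star M F [r,r] 0 SP c 2 As \<inter> {0,2}) \<le> sum c {0::nat}"
        by (rule sum_mono2[OF _ sub0]) simp_all
      then show ?thesis using CostModel by (simp add: val_def c_def)
    qed
  qed
  have manip: "val M c {0,2} (F_star M F [r,r] 0 {0,2} c 2 As) = 2" if hA: "profile_on {0,2} As" for As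
  proof -
    obtain X where X: "X \<subseteq> {0,2}" "F_star M F [r,r] 0 {0,2} c 2 As = F {0,2} c 2 (As[0 := X])"
      using Fstar_form[OF vSP' assms(3) hA, where M=M and prefs="[r,r]" and i=0] by auto
    have "profile_on {0,2} (As[0 := X])" using hA X(1)
      unfolding profile_on_def by (auto dest!: set_update_subset_insert[THEN subsetD])
    then have ex: "exhaustive {0,2} c 2 (F {0,2} c 2 (As[0 := X]))"
      using assms(4) vSP' unfolding exhaustive_rule_def by blast
    have "F {0,2} c 2 (As[0 := X]) = {0,2}"
    proof -
      let ?A = "F {0,2} c 2 (As[0 := X])"
      have "?A \<subseteq> {0,2}" using ex by (simp add: exhaustive_def feasible_def)
      then have "?A = {} \<or> ?A = {0} \<or> ?A = {2} \<or> ?A = {0,2}" by blast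
      moreover have "{0,2::nat} - {2} = {0}" "{0,2::nat} - {0} = {2}" "{0,2::nat} - {} = {0,2}" by auto
      ultimately show ?thesis using ex by (elim disjE) (simp_all add: exhaustive_def c_def)
    qed
    then show ?thesis using X(2) by (cases M) (auto simp: val_def c_def)
  qed
  have ex0: "[{},{}] \<in> {As. length As = length [{1::nat},{0}] \<and> profile_on X As}" for X :: "nat set"
    by (simp add: profile_on_def)
  have key: "successful_manip k M R F [r,r] PP c 2 [{1},{0}] 0 {2}" for k
  proof -
    have e1: "R PP c 2 [{1},{0}] = SP" by (simp add: SP_def)
    have e2: "R PP c 2 ([{1},{0}][0 := {2}]) = {0,2}" using SP'eq by (simp add: SP'_def)
    have Q: "top c 2 ([r,r] ! 0) (SP \<union> {0,2}) = {0,2}" using Qeq SP'eq by simp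
    have allp: "strict_pref M c {0,2} (F_star M F [r,r] 0 {0,2} c 2 A') (F_star M F [r,r] 0 SP c 2 A)"
      if "profile_on SP A" "profile_on {0,2} A'" for A A'
      using truth[OF that(1)] manip[OF that(2)] by (simp add: strict_pref_val)
    have pm1: "profile_on SP (map (\<lambda>r. top c 2 r SP) [r,r])"
      using top_sub[OF finSP] by (simp add: profile_on_def r_def)
    have pm2: "profile_on {0,2} (map (\<lambda>r. top c 2 r {0,2}) [r,r])"
      using top_sub[of "{0,2}"] by (simp add: profile_on_def r_def)
    have p0: "profile_on X [{},{}]" for X by (simp add: profile_on_def)
    let ?P1 = "{As. length As = length [{1::nat},{0}] \<and> profile_on SP As}"
    let ?P2 = "{As. length As = length [{1::nat},{0}] \<and> profile_on {0,2} As}"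
    let ?Fs = "F_star M F [r,r] 0"
    have W: "\<forall>A\<in>?P1. \<forall>A'\<in>?P2. weak_pref M c {0,2} (?Fs {0,2} c 2 A') (?Fs SP c 2 A)"
      using allp by (auto simp: strict_pref_def)
    have E: "\<exists>A\<in>?P1. \<exists>A'\<in>?P2. strict_pref M c {0,2} (?Fs {0,2} c 2 A') (?Fs SP c 2 A)"
    proof (intro bexI)
      show "[{},{}] \<in> ?P1" "[{},{}] \<in> ?P2" by (simp_all add: profile_on_def)
      show "strict_pref M c {0,2} (?Fs {0,2} c 2 [{},{}]) (?Fs SP c 2 [{},{}])"
        using allp[OF p0 p0] .
    qed
    have A: "strict_pref M c {0,2} (?Fs {0,2} c 2 (map (\<lambda>r. top c 2 r {0,2}) [r,r]))
        (?Fs SP c 2 (map (\<lambda>r. top c 2 r SP) [r,r]))"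
      using allp[OF pm1 pm2] .
    show ?thesis
      unfolding successful_manip_def Let_def e1 e2 Q
      using W E A by (cases k) simp_all
  qed
  have cond: "\<forall>j<length [{1::nat},{0}]. [{1::nat},{0}] ! j \<subseteq> [{1,2},{0}] ! j \<and>
           [{1::nat,2},{0}] ! j \<subseteq> PP \<and> strict_linear_order_on PP ([r,r] ! j)"
    by (auto simp: less_Suc_eq PP_def r_def lt_slo)
  have notk: "\<not> R_FSSP k M R F" for k
  proof
    assume A: "R_FSSP k M R F"
    have "\<not> successful_manip k M R F [r,r] PP c 2
              ([{1},{0}][0 := top c 2 ([r,r] ! 0) ([{1,2},{0}] ! 0)]) 0 {2}"
      by (rule A[unfolded R_FSSP_def, rule_format, of PP c 2 "[{1,2},{0}]" "[{1},{0}]" "[r,r]" 0 "{2}"])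
        (use cond vPP in simp)
    then show False using key[of k] t12 by simp
  qed
  show ?thesis using notk by blast
qed

end
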